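(* Let $\mathcal{X}=\mathcal{Y}=\mathcal{A}=\mathcal{B}=\{0,1\}$ and $\kappa\in[0,1)$. Then $$\max_{p\in\mathcal{P}_2^{AB,(0,\kappa)}}\ \big(\langle A_0B_0\rangle+\langle A_0B_1\rangle+\langle A_1B_0\rangle-\langle A_1B_1\rangle\big)=2+2\kappa,$$ where $\langle A_xB_y\rangle=\sum_{a,b\in\{0,1\}}(-1)^{a+b}p(ab|xy)$.
   Context: $\mathcal{P}_2^{AB,(\epsilon_A,\epsilon_B)}$ is the set of all conditional distributions $p(ab|xy)$ for which there exist a probability space $(\Lambda,q)$ and distributions $p_A(\cdot|x,y,\lambda)$, $p_B(\cdot|x,y,\lambda)$ on $\{0,1\}$ with $p(ab|xy)=\int q(d\lambda)p_A(a|xy\lambda)p_B(b|xy\lambda)$, $\frac12\sum_a|p_A(a|xy\lambda)-p_A(a|xy'\lambda)|\le\epsilon_A$ for all $x,y,y',\lambda$, and $\frac12\sum_b|p_B(b|xy\lambda)-p_B(b|x'y\lambda)|\le\epsilon_B$ for all $y,x,x',\lambda$. With $\epsilon_A=0,\epsilon_B=\kappa$ this models leakage of Alice's input to Bob's outcome only. *)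

theory Defs
  imports "HOL-Probability.Probability"
begin

text \<open>Inputs x,y and outcomes a,b range over {0,1} (as naturals).
  A conditional distribution is p a b x y = p(ab|xy).
  The hidden variable lives in a probability space M on an arbitrary type 'l.\<close>

definition bits :: "nat set" where "bits = {0, 1}"

definition is_local_distr :: "(nat \<Rightarrow> nat \<Rightarrow> 'l \<Rightarrow> nat \<Rightarrow> real) \<Rightarrow> 'l measure \<Rightarrow> bool" where
  "is_local_distr f M \<longleftrightarrow>
     (\<forall>x\<in>bits. \<forall>y\<in>bits. \<forall>l\<in>space M.
        (\<forall>a\<in>bits. 0 \<le> f x y l a) \<and> (\<Sum>a\<in>bits. f x y l a) = 1) \<and>
     (\<forall>x\<in>bits. \<forall>y\<in>bits. \<forall>a\<in>bits. (\<lambda>l. f x y l a) \<in> borel_measurable M)"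

definition P2 :: "'l itself \<Rightarrow> real \<Rightarrow> real \<Rightarrow> (nat \<Rightarrow> nat \<Rightarrow> nat \<Rightarrow> nat \<Rightarrow> real) set" where
  "P2 _ epsA epsB = {p. \<exists>(M::'l measure) pA pB.
     prob_space M \<and> is_local_distr pA M \<and> is_local_distr pB M \<and>
     (\<forall>a\<in>bits. \<forall>b\<in>bits. \<forall>x\<in>bits. \<forall>y\<in>bits.
        p a b x y = (\<integral>l. pA x y l a * pB x y l b \<partial>M)) \<and>
     (\<forall>x\<in>bits. \<forall>y\<in>bits. \<forall>y'\<in>bits. \<forall>l\<in>space M.
        (1/2) * (\<Sum>a\<in>bits. \<bar>pA x y l a - pA x y' l a\<bar>) \<le> epsA) \<and>
     (\<forall>y\<in>bits. \<forall>x\<in>bits. \<forall>x'\<in>bits. \<forall>l\<in>space M.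
        (1/2) * (\<Sum>b\<in>bits. \<bar>pB x y l b - pB x' y l b\<bar>) \<le> epsB)}"

definition corr :: "(nat \<Rightarrow> nat \<Rightarrow> nat \<Rightarrow> nat \<Rightarrow> real) \<Rightarrow> nat \<Rightarrow> nat \<Rightarrow> real" where
  "corr p x y = (\<Sum>a\<in>bits. \<Sum>b\<in>bits. (-1) ^ (a + b) * p a b x y)"

definition chsh :: "(nat \<Rightarrow> nat \<Rightarrow> nat \<Rightarrow> nat \<Rightarrow> real) \<Rightarrow> real" where
  "chsh p = corr p 0 0 + corr p 0 1 + corr p 1 0 - corr p 1 1"

end

theory Submission
  imports Defs
begin

lemma pw:
  fixes u0 u1 b00 b01 b10 b11 k :: real
  assumes "0 \<le> u0" "u0 \<le> 1" "0 \<le> u1" "u1 \<le> 1"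
    "0 \<le> b00" "b00 \<le> 1" "0 \<le> b01" "b01 \<le> 1" "0 \<le> b10" "b10 \<le> 1" "0 \<le> b11" "b11 \<le> 1"
    "\<bar>b00 - b10\<bar> \<le> k" "\<bar>b01 - b11\<bar> \<le> k"
  shows "(2*u0-1)*(2* b00-1) + (2*u0-1)*(2* b01-1) + (2*u1-1)*(2* b10-1) - (2*u1-1)*(2* b11-1) \<le> 2 + 2*k"
proof -
  have h: "(A::real) * s \<le> \<bar>s\<bar>" if "\<bar>A\<bar> \<le> 1" for A s
  proof -
    have "A * s \<le> \<bar>A * s\<bar>" by simp
    also have "\<dots> = \<bar>A\<bar> * \<bar>s\<bar>" by (simp add: abs_mult)
    also have "\<dots> \<le> \<bar>s\<bar>" using that by (simp add: mult_left_le_one_le)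
    finally show ?thesis .
  qed
  have 1: "(2*u0-1)*((2* b00-1) + (2* b01-1)) \<le> \<bar>(2* b00-1) + (2* b01-1)\<bar>"
    by (rule h) (use assms in auto)
  have 2: "(2*u1-1)*((2* b10-1) - (2* b11-1)) \<le> \<bar>(2* b10-1) - (2* b11-1)\<bar>"
    by (rule h) (use assms in auto)
  have 3: "\<bar>(2* b00-1) + (2* b01-1)\<bar> + \<bar>(2* b10-1) - (2* b11-1)\<bar> \<le> 2 + 2*k"
    using assms by (auto simp: abs_if split: if_splits)
  show ?thesis using 1 2 3 by (simp add: algebra_simps)
qed

lemma upper:
  fixes \<kappa> :: real
  assumes "p \<in> P2 TYPE('l) 0 \<kappa>"
  shows "chsh p \<le> 2 + 2 * \<kappa>"
proof -
  from assms obtain M :: "'l measure" and pA pB where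
    M: "prob_space M" and lA: "is_local_distr pA M" and lB: "is_local_distr pB M" and
    pe: "\<forall>a\<in>bits. \<forall>b\<in>bits. \<forall>x\<in>bits. \<forall>y\<in>bits.
        p a b x y = (\<integral>l. pA x y l a * pB x y l b \<partial>M)" and
    nsA: "\<forall>x\<in>bits. \<forall>y\<in>bits. \<forall>y'\<in>bits. \<forall>l\<in>space M.
        (1/2) * (\<Sum>a\<in>bits. \<bar>pA x y l a - pA x y' l a\<bar>) \<le> 0" and
    nsB: "\<forall>y\<in>bits. \<forall>x\<in>bits. \<forall>x'\<in>bits. \<forall>l\<in>space M.
        (1/2) * (\<Sum>b\<in>bits. \<bar>pB x y l b - pB x' y l b\<bar>) \<le> \<kappa>"
    unfolding P2_def by blast
  interpret prob_space M by (rule M)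
  have A: "\<And>x y a l. x \<in> bits \<Longrightarrow> y \<in> bits \<Longrightarrow> l \<in> space M \<Longrightarrow> a \<in> bits \<Longrightarrow> 0 \<le> pA x y l a"
   and As: "\<And>x y l. x \<in> bits \<Longrightarrow> y \<in> bits \<Longrightarrow> l \<in> space M \<Longrightarrow> pA x y l 0 + pA x y l 1 = 1"
   and Am: "\<And>x y a. x \<in> bits \<Longrightarrow> y \<in> bits \<Longrightarrow> a \<in> bits \<Longrightarrow> (\<lambda>l. pA x y l a) \<in> borel_measurable M"
    using lA unfolding is_local_distr_def bits_def by auto
  have B: "\<And>x y a l. x \<in> bits \<Longrightarrow> y \<in> bits \<Longrightarrow> l \<in> space M \<Longrightarrow> a \<in> bits \<Longrightarrow> 0 \<le> pB x y l a"
   and Bs: "\<And>x y l. x \<in> bits \<Longrightarrow> y \<in> bits \<Longrightarrow> l \<in> space M \<Longrightarrow> pB x y l 0 + pB x y l 1 = 1"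
   and Bm: "\<And>x y a. x \<in> bits \<Longrightarrow> y \<in> bits \<Longrightarrow> a \<in> bits \<Longrightarrow> (\<lambda>l. pB x y l a) \<in> borel_measurable M"
    using lB unfolding is_local_distr_def bits_def by auto
  have b0: "(0::nat) \<in> bits" and b1: "(1::nat) \<in> bits" and b1s: "Suc 0 \<in> bits" by (auto simp: bits_def)
  have int: "integrable M (\<lambda>l. pA x y l a * pB x y l b)"
    if "x \<in> bits" "y \<in> bits" "a \<in> bits" "b \<in> bits" for x y a b
  proof (rule integrable_const_bound[where B=1])
    show "AE l in M. norm (pA x y l a * pB x y l b) \<le> 1"
    proof (rule AE_I2)
      fix l assume l: "l \<in> space M"
      have "0 \<le> pA x y l a" "0 \<le> pB x y l b" using A B that l by auto
      moreover have "pA x y l a \<le> 1" using A[OF that(1,2) l b0] A[OF that(1,2) l b1] As[OF that(1,2) l] that(3)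
        by (auto simp: bits_def)
      moreover have "pB x y l b \<le> 1" using B[OF that(1,2) l b0] B[OF that(1,2) l b1] Bs[OF that(1,2) l] that(4)
        by (auto simp: bits_def)
      ultimately show "norm (pA x y l a * pB x y l b) \<le> 1"
        by (simp add: abs_mult mult_le_one)
    qed
    show "(\<lambda>l. pA x y l a * pB x y l b) \<in> borel_measurable M"
      using Am Bm that by auto
  qed
  define q where "q l = (\<lambda>a b x y. pA x y l a * pB x y l b)" for l
  have eq: "chsh p = (\<integral>l. chsh (q l) \<partial>M)"
    unfolding chsh_def corr_def q_def
    using pe int[OF b0 b0 b0 b0] int[OF b0 b0 b0 b1] int[OF b0 b0 b1 b0] int[OF b0 b0 b1 b1]
      int[OF b0 b1 b0 b0] int[OF b0 b1 b0 b1] int[OF b0 b1 b1 b0] int[OF b0 b1 b1 b1]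
      int[OF b1 b0 b0 b0] int[OF b1 b0 b0 b1] int[OF b1 b0 b1 b0] int[OF b1 b0 b1 b1]
      int[OF b1 b1 b0 b0] int[OF b1 b1 b0 b1] int[OF b1 b1 b1 b0] int[OF b1 b1 b1 b1]
    by (simp add: bits_def)
  have pt: "chsh (q l) \<le> 2 + 2 * \<kappa>" if l: "l \<in> space M" for l
  proof -
    have eqA: "pA x (Suc 0) l a = pA x 0 l a" if "x \<in> bits" "a \<in> bits" for x a
    proof -
      have "(1/2) * (\<Sum>a\<in>bits. \<bar>pA x (Suc 0) l a - pA x 0 l a\<bar>) \<le> 0"
        using nsA that l b0 b1 One_nat_def by metis
      then show ?thesis using that by (auto simp: bits_def)
    qed
    have dB: "\<bar>pB 0 y l 0 - pB 1 y l 0\<bar> \<le> \<kappa>" if "y \<in> bits" for y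
    proof -
      have "(1/2) * (\<Sum>b\<in>bits. \<bar>pB 0 y l b - pB 1 y l b\<bar>) \<le> \<kappa>"
        using nsB that l b0 b1 by blast
      moreover have "pB 0 y l 1 = 1 - pB 0 y l 0" "pB 1 y l 1 = 1 - pB 1 y l 0"
        using Bs[OF b0 that l] Bs[OF b1 that l] by auto
      ultimately show ?thesis by (simp add: bits_def)
    qed
    have Ale: "pA x y l 0 \<le> 1" "0 \<le> pA x y l 0" if "x \<in> bits" "y \<in> bits" for x y
      using A[OF that l b0] A[OF that l b1] As[OF that l] by (auto simp: bits_def)
    have Ble: "pB x y l 0 \<le> 1" "0 \<le> pB x y l 0" if "x \<in> bits" "y \<in> bits" for x y
      using B[OF that l b0] B[OF that l b1] Bs[OF that l] by (auto simp: bits_def)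
    have A1: "pA x y l (Suc 0) = 1 - pA x y l 0" if "x \<in> bits" "y \<in> bits" for x y
      using As[OF that l] by simp
    have B1: "pB x y l (Suc 0) = 1 - pB x y l 0" if "x \<in> bits" "y \<in> bits" for x y
      using Bs[OF that l] by simp
    have "chsh (q l) =
      (2*pA 0 0 l 0-1)*(2*pB 0 0 l 0-1) + (2*pA 0 0 l 0-1)*(2*pB 0 1 l 0-1)
      + (2*pA 1 0 l 0-1)*(2*pB 1 0 l 0-1) - (2*pA 1 0 l 0-1)*(2*pB 1 1 l 0-1)"
      unfolding chsh_def corr_def q_def
      by (simp add: bits_def eqA[OF b0 b0] eqA[OF b0 b1s] eqA[OF b1s b0] eqA[OF b1s b1s]
        A1[OF b0 b0] A1[OF b1s b0] A1[OF b0 b1s] A1[OF b1s b1s] B1[OF b0 b0] B1[OF b0 b1s] B1[OF b1s b0] B1[OF b1s b1s] algebra_simps)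
    also have "\<dots> \<le> 2 + 2 * \<kappa>"
      by (rule pw) (use Ale[OF b0 b0] Ale[OF b1 b0] Ble[OF b0 b0] Ble[OF b0 b1]
          Ble[OF b1 b0] Ble[OF b1 b1] dB[OF b0] dB[OF b1] in auto)
    finally show ?thesis .
  qed
  have "integrable M (\<lambda>l. chsh (q l))"
    unfolding chsh_def corr_def q_def
    using int[OF b0 b0 b0 b0] int[OF b0 b0 b0 b1] int[OF b0 b0 b1 b0] int[OF b0 b0 b1 b1]
      int[OF b0 b1 b0 b0] int[OF b0 b1 b0 b1] int[OF b0 b1 b1 b0] int[OF b0 b1 b1 b1]
      int[OF b1 b0 b0 b0] int[OF b1 b0 b0 b1] int[OF b1 b0 b1 b0] int[OF b1 b0 b1 b1]
      int[OF b1 b1 b0 b0] int[OF b1 b1 b0 b1] int[OF b1 b1 b1 b0] int[OF b1 b1 b1 b1]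
    by (simp add: bits_def)
  then have "(\<integral>l. chsh (q l) \<partial>M) \<le> 2 + 2 * \<kappa>"
    by (rule integral_le_const) (use pt in \<open>auto intro: AE_I2\<close>)
  then show ?thesis using eq by simp
qed

theorem mainTheorem9:
  fixes \<kappa> :: real
  assumes "0 \<le> \<kappa>" and "\<kappa> < 1"
  shows "(\<forall>p\<in>P2 TYPE('l) 0 \<kappa>. chsh p \<le> 2 + 2 * \<kappa>) \<and>
         (\<exists>p\<in>P2 TYPE('l) 0 \<kappa>. chsh p = 2 + 2 * \<kappa>)"
proof
  show "\<forall>p\<in>P2 TYPE('l) 0 \<kappa>. chsh p \<le> 2 + 2 * \<kappa>" using upper by blast
next
  define M :: "'l measure" where "M = return (count_space UNIV) undefined"
  define pA :: "nat \<Rightarrow> nat \<Rightarrow> 'l \<Rightarrow> nat \<Rightarrow> real" where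
    "pA x y l a = (if a = 0 then 1 else 0)" for x y l a
  define pB :: "nat \<Rightarrow> nat \<Rightarrow> 'l \<Rightarrow> nat \<Rightarrow> real" where
    "pB x y l b = (if x = 1 \<and> y = 1 then (if b = 0 then 1 - \<kappa> else \<kappa>) else (if b = 0 then 1 else 0))" for x y l b
  define p where "p a b x y = pA x y undefined a * pB x y undefined b" for a b x y
  have sM: "space M = UNIV" by (simp add: M_def)
  have PM: "prob_space M" unfolding M_def by (rule prob_space_return) simp
  have m1: "measure M UNIV = 1" using prob_space.prob_space[OF PM] sM by simp
  have "p \<in> P2 TYPE('l) 0 \<kappa>"
    unfolding P2_def
  proof (intro CollectI exI conjI)
    show "prob_space M" by (rule PM)
    show "is_local_distr pA M" unfolding is_local_distr_def pA_def bits_def by auto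
    show "is_local_distr pB M" unfolding is_local_distr_def pB_def bits_def using assms by auto
    show "\<forall>a\<in>bits. \<forall>b\<in>bits. \<forall>x\<in>bits. \<forall>y\<in>bits.
        p a b x y = (\<integral>l. pA x y l a * pB x y l b \<partial>M)"
      using m1 sM unfolding p_def pA_def pB_def by simp
    show "\<forall>x\<in>bits. \<forall>y\<in>bits. \<forall>y'\<in>bits. \<forall>l\<in>space M.
        (1/2) * (\<Sum>a\<in>bits. \<bar>pA x y l a - pA x y' l a\<bar>) \<le> 0"
      unfolding pA_def by simp
    show "\<forall>y\<in>bits. \<forall>x\<in>bits. \<forall>x'\<in>bits. \<forall>l\<in>space M.
        (1/2) * (\<Sum>b\<in>bits. \<bar>pB x y l b - pB x' y l b\<bar>) \<le> \<kappa>"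
      unfolding pB_def bits_def using assms by auto
  qed
  moreover have "chsh p = 2 + 2 * \<kappa>"
    unfolding chsh_def corr_def p_def pA_def pB_def bits_def by simp
  ultimately show "\<exists>p\<in>P2 TYPE('l) 0 \<kappa>. chsh p = 2 + 2 * \<kappa>" by blast
qed

end
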